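(* For every $a\in[\mathbb{F}_q^{\times}]$ (Teichmüller lifts) one has $f_a^{\mathrm{LT}}=1$. More generally, for every $a\in\mathcal{O}_K^{\times}$, \[ \big(f_a^{\mathrm{LT}}\big)^{-1}\in 1+c_aT_K^{q-1}-c_a^{p^{f-1}}T_K^{(q-1)(p^{f-1}+1)}+T_K^{(q-1)(2p^{f-1}+1)}\mathbb{F}_q[[T_K^{q-1}]], \] where $c_a\in\mathbb{F}_q$ is the reduction modulo $p$ of $(1-a^{q-1})/p\in\mathcal{O}_K$.
   Context: Let $p$ be an odd prime, $K$ the unramified extension of $\mathbb{Q}_p$ of degree $f\ge1$, with ring of integers $\mathcal{O}_K$ and residue field $\mathbb{F}_q$, $q=p^f$. Let $G_{\mathrm{LT}}$ be the Lubin–Tate formal $\mathcal{O}_K$-module over $\mathcal{O}_K$ attached to the uniformizer $p$, with formal variable $T_K$ chosen so that its logarithm is $\sum_{n\ge0}p^{-n}T_K^{q^n}$. For $a\in\mathcal{O}_K$ let $a_{\mathrm{LT}}(T_K)\in aT_K+T_K^2\mathcal{O}_K[[T_K]]$ be the endomorphism series of $G_{\mathrm{LT}}$ attached to $a$, and also denote by $a_{\mathrm{LT}}(T_K)\in\mathbb{F}_q[[T_K]]$ its reduction mod $p$. For $a\in\mathcal{O}_K^\times$ with reduction $\bar a\in\mathbb{F}_q^\times$, set $f_a^{\mathrm{LT}}:=\bar aT_K/a_{\mathrm{LT}}(T_K)\in 1+T_K\mathbb{F}_q[[T_K]]$. *)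

theory Defs
  imports "HOL-Computational_Algebra.Formal_Power_Series"
begin

definition dvd_in :: "'k::field set \<Rightarrow> 'k \<Rightarrow> 'k \<Rightarrow> bool" where
  "dvd_in OK d x \<longleftrightarrow> (\<exists>y\<in>OK. x = d * y)"

text \<open>The field 'k (= K) with subset OK (= O_K) and reduction map red : OK -> 'r (= F_q)
  form the unramified extension of Q_p of degree f:
  'k has characteristic 0, OK is a valuation ring of 'k (so 'k = Frac OK) whose maximal ideal
  is p OK, OK is p-adically separated and complete (so OK is a complete DVR with uniformizer p),
  and red is a surjective ring homomorphism OK -> 'r with kernel p OK onto a field with p^f
  elements. Such data is unique up to isomorphism (K = unramified extension of degree f).\<close>
definition unramified_setup ::
  "nat \<Rightarrow> nat \<Rightarrow> 'k::field_char_0 set \<Rightarrow> ('k \<Rightarrow> 'r::{field,finite}) \<Rightarrow> bool" where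
  "unramified_setup p f OK red \<longleftrightarrow>
     0 \<in> OK \<and> 1 \<in> OK \<and>
     (\<forall>x\<in>OK. \<forall>y\<in>OK. x + y \<in> OK \<and> x * y \<in> OK \<and> - x \<in> OK) \<and>
     (\<forall>x. x \<noteq> 0 \<longrightarrow> x \<in> OK \<or> inverse x \<in> OK) \<and>
     inverse (of_nat p) \<notin> OK \<and>
     (\<forall>x\<in>OK. \<not> dvd_in OK (of_nat p) x \<longrightarrow> inverse x \<in> OK) \<and>
     (\<forall>x\<in>OK. x \<noteq> 0 \<longrightarrow> (\<exists>n. \<not> dvd_in OK (of_nat p ^ n) x)) \<and>
     (\<forall>s. (\<forall>n. s n \<in> OK) \<and> (\<forall>n. dvd_in OK (of_nat p ^ n) (s (Suc n) - s n)) \<longrightarrow>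
          (\<exists>x\<in>OK. \<forall>n. dvd_in OK (of_nat p ^ n) (x - s n))) \<and>
     red 1 = 1 \<and>
     (\<forall>x\<in>OK. \<forall>y\<in>OK. red (x + y) = red x + red y \<and> red (x * y) = red x * red y) \<and>
     red ` OK = UNIV \<and>
     (\<forall>x\<in>OK. red x = 0 \<longleftrightarrow> dvd_in OK (of_nat p) x) \<and>
     card (UNIV :: 'r set) = p ^ f"

text \<open>Logarithm of the Lubin-Tate formal group: sum over n of p^(-n) T^(q^n), q = p^f.\<close>
definition LT_log :: "nat \<Rightarrow> nat \<Rightarrow> 'k::field_char_0 fps" where
  "LT_log p f = Abs_fps (\<lambda>k. if k \<in> range (\<lambda>m. (p ^ f) ^ m)
        then inverse (of_nat p ^ (LEAST m. (p ^ f) ^ m = k)) else 0)"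

definition LT_endo :: "nat \<Rightarrow> nat \<Rightarrow> 'k::field_char_0 \<Rightarrow> 'k fps" where
  "LT_endo p f a = fps_inv (LT_log p f) oo (fps_const a * LT_log p f)"

definition red_fps :: "('k \<Rightarrow> 'r) \<Rightarrow> 'k fps \<Rightarrow> 'r fps" where
  "red_fps red g = Abs_fps (\<lambda>n. red (fps_nth g n))"

definition f_LT :: "nat \<Rightarrow> nat \<Rightarrow> ('k::field_char_0 \<Rightarrow> 'r::field) \<Rightarrow> 'k \<Rightarrow> 'r fps" where
  "f_LT p f red a = fps_const (red a) * fps_X / red_fps red (LT_endo p f a)"

end

theory Submission
  imports Defs "HOL-Computational_Algebra.Primes"
begin
unbundle fps_syntax

lemma binom_pow_dvd:
  fixes p j C e k :: nat
  assumes "prime p" "p^e dvd j*C" "j \<noteq> 0" "\<not> p^k dvd j" "k \<le> e"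
  shows "p^(e+1-k) dvd C"
proof (cases "C = 0")
  case True then show ?thesis by simp
next
  case False
  have m: "multiplicity p (j*C) = multiplicity p j + multiplicity p C"
    using assms False by (intro prime_elem_multiplicity_mult_distrib) auto
  have nu: "\<not> is_unit p" using assms(1) by (simp add: prime_nat_iff)
  have "e \<le> multiplicity p (j*C)" using assms(2,3) False nu power_dvd_iff_le_multiplicity[of "j*C" p e] by simp
  moreover have "multiplicity p j < k" using assms(3,4) nu power_dvd_iff_le_multiplicity[of j p k]
    by simp
  ultimately have "e+1-k \<le> multiplicity p C" using m by linarith
  then show ?thesis using False nu power_dvd_iff_le_multiplicity[of C p "e+1-k"] by simp
qed

lemma choose_pp_dvd:
  fixes p e j :: nat
  assumes "prime p" "0 < j" "j < p^e"
  shows "p dvd (p^e choose j)"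
proof -
  have "j * (p^e choose j) = p^e * ((p^e - 1) choose (j - 1))"
    using times_binomial_minus1_eq assms(2) by blast
  hence "p^e dvd j * (p^e choose j)" by simp
  moreover have "\<not> p^e dvd j" using assms(2,3) by (auto dest: dvd_imp_le)
  ultimately have "p^(e+1-e) dvd (p^e choose j)"
    using binom_pow_dvd[OF assms(1)] assms by blast
  thus ?thesis by simp
qed

lemma choose_pp_dvd2:
  fixes p f j :: nat
  assumes "prime p" "f \<ge> 1" "0 < j" "j < 2 * p^(f-1)" "j \<noteq> p^(f-1)"
  shows "p^2 dvd (p^f choose j)"
proof -
  have "j * (p^f choose j) = p^f * ((p^f - 1) choose (j - 1))"
    using times_binomial_minus1_eq assms(3) by blast
  hence d: "p^f dvd j * (p^f choose j)" by simp
  have nd: "\<not> p^(f-1) dvd j"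
  proof
    assume "p^(f-1) dvd j"
    then obtain k where k: "j = p^(f-1) * k" by blast
    have pos: "p^(f-1) > 0" using assms(1) prime_gt_0_nat by simp
    have "k \<noteq> 0" using k assms(3) by auto
    moreover have "k < 2"
    proof (rule ccontr)
      assume "\<not> k < 2"
      hence "p^(f-1) * 2 \<le> p^(f-1) * k" by simp
      thus False using k assms(4) by linarith
    qed
    ultimately have "k = 1" by linarith
    thus False using k assms(5) by simp
  qed
  show ?thesis
  proof (cases "f \<ge> 2")
    case True
    have "p^(f+1-(f-1)) dvd (p^f choose j)"
      using binom_pow_dvd[OF assms(1) d, of "f-1"] assms(3) nd True by simp
    moreover have "f+1-(f-1) = 2" using True by simp
    ultimately show ?thesis by simp
  next
    case False
    hence "f = 1" using assms by simp
    then show ?thesis using nd by simp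
  qed
qed


lemma fps_pow_dep:
  fixes F G :: "'a::comm_ring_1 fps"
  assumes "\<forall>k\<le>N. F $ k = G $ k" "k \<le> N"
  shows "(F ^ i) $ k = (G ^ i) $ k"
  using assms(2)
proof (induction i arbitrary: k)
  case 0 then show ?case by simp
next
  case (Suc i)
  have "(F ^ Suc i) $ k = (\<Sum>j=0..k. F $ j * (F ^ i) $ (k - j))" by (simp add: fps_mult_nth)
  also have "\<dots> = (\<Sum>j=0..k. G $ j * (G ^ i) $ (k - j))"
    using Suc assms(1) by (intro sum.cong) auto
  also have "\<dots> = (G ^ Suc i) $ k" by (simp add: fps_mult_nth)
  finally show ?case .
qed

lemma fps_pow_dep_strict:
  fixes G :: "'a::comm_ring_1 fps"
  assumes "G $ 0 = 0" "2 \<le> i"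
  shows "(G ^ i) $ n = ((fps_cutoff n G) ^ i) $ n"
proof -
  let ?A = "fps_cutoff n G"
  obtain j where j: "i = Suc j" "j \<ge> 1" using assms(2) by (cases i) auto
  have A0: "?A $ 0 = 0" using assms(1) by simp
  have eqc: "\<forall>k\<le>n - 1. ?A $ k = G $ k" if "n > 0" using that by auto
  have "(G ^ i) $ n = (\<Sum>k=0..n. G $ k * (G ^ j) $ (n - k))" by (simp add: j fps_mult_nth)
  also have "\<dots> = (\<Sum>k=0..n. ?A $ k * (?A ^ j) $ (n - k))"
  proof (intro sum.cong refl)
    fix k assume k: "k \<in> {0..n}"
    show "G $ k * (G ^ j) $ (n - k) = ?A $ k * (?A ^ j) $ (n - k)"
    proof (cases "k = 0")
      case True then show ?thesis using assms(1) A0 by simp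
    next
      case False
      show ?thesis
      proof (cases "k = n")
        case True
        have "(G ^ j) $ 0 = 0" using assms(1) j(2) by (simp add: fps_power_zeroth power_0_left)
        then show ?thesis using True by simp
      next
        case False2: False
        have "(G ^ j) $ (n - k) = (?A ^ j) $ (n - k)"
          using fps_pow_dep[of "n - 1" ?A G "n - k" j] eqc k False False2 by auto
        then show ?thesis using k False2 by simp
      qed
    qed
  qed
  also have "\<dots> = (?A ^ i) $ n" by (simp add: j fps_mult_nth)
  finally show ?thesis .
qed

lemma fps_pow_supp:
  fixes g :: "'a::comm_ring_1 fps" and d :: nat
  assumes "\<forall>k\<le>N. g $ k \<noteq> 0 \<longrightarrow> k mod d = 1 mod d" "k \<le> N" "(g ^ i) $ k \<noteq> 0"
  shows "k mod d = i mod d"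
  using assms(2,3)
proof (induction i arbitrary: k)
  case 0 then show ?case by (simp split: if_splits)
next
  case (Suc i)
  have "(\<Sum>j=0..k. g $ j * (g ^ i) $ (k - j)) \<noteq> 0" using Suc.prems by (simp add: fps_mult_nth)
  then obtain j where j: "j \<in> {0..k}" "g $ j * (g ^ i) $ (k - j) \<noteq> 0"
    by (meson sum.neutral)
  have "g $ j \<noteq> 0" using j(2) by auto
  hence "j mod d = 1 mod d" using assms(1) j(1) Suc.prems(1) by simp
  moreover have "(g ^ i) $ (k - j) \<noteq> 0" using j(2) by auto
  hence "(k - j) mod d = i mod d" using Suc.IH[of "k - j"] j(1) Suc.prems(1) by simp
  ultimately have "(j + (k - j)) mod d = (1 + i) mod d" by (metis mod_add_eq)
  moreover have "j + (k - j) = k" using j by auto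
  ultimately show ?case by simp
qed

locale LTctx =
  fixes p f :: nat and OK :: "'k::field_char_0 set" and red :: "'k \<Rightarrow> 'r::{field,finite}"
  assumes prime: "prime p" and oddp: "odd p" and f1: "f \<ge> 1"
    and U: "unramified_setup p f OK red"
begin

lemmas U' = U[unfolded unramified_setup_def]
lemmas OK0 = U'[THEN conjunct1]
lemmas OK1 = U'[THEN conjunct2, THEN conjunct1]
lemmas OKcl = U'[THEN conjunct2, THEN conjunct2, THEN conjunct1]
lemmas Ured1 = U'[THEN conjunct2, THEN conjunct2, THEN conjunct2, THEN conjunct2, THEN conjunct2,
  THEN conjunct2, THEN conjunct2, THEN conjunct2, THEN conjunct1]
lemmas Uredhom = U'[THEN conjunct2, THEN conjunct2, THEN conjunct2, THEN conjunct2, THEN conjunct2,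
  THEN conjunct2, THEN conjunct2, THEN conjunct2, THEN conjunct2, THEN conjunct1]
lemmas Ukernel = U'[THEN conjunct2, THEN conjunct2, THEN conjunct2, THEN conjunct2, THEN conjunct2,
  THEN conjunct2, THEN conjunct2, THEN conjunct2, THEN conjunct2, THEN conjunct2, THEN conjunct2, THEN conjunct1]
lemmas Ucard = U'[THEN conjunct2, THEN conjunct2, THEN conjunct2, THEN conjunct2, THEN conjunct2,
  THEN conjunct2, THEN conjunct2, THEN conjunct2, THEN conjunct2, THEN conjunct2, THEN conjunct2, THEN conjunct2]

lemma OK_add: "x \<in> OK \<Longrightarrow> y \<in> OK \<Longrightarrow> x + y \<in> OK"
  and OK_mult: "x \<in> OK \<Longrightarrow> y \<in> OK \<Longrightarrow> x * y \<in> OK"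
  and OK_uminus: "x \<in> OK \<Longrightarrow> - x \<in> OK"
  using OKcl by blast+

lemma OK_diff: "x \<in> OK \<Longrightarrow> y \<in> OK \<Longrightarrow> x - y \<in> OK"
  using OK_add OK_uminus by (metis diff_conv_add_uminus)

lemma OK_pow: "x \<in> OK \<Longrightarrow> x ^ n \<in> OK"
  by (induction n) (auto intro: OK1 OK_mult)

lemma OK_of_nat: "of_nat n \<in> OK"
  by (induction n) (auto intro: OK0 OK1 OK_add)

lemma OK_sum: "finite A \<Longrightarrow> (\<And>i. i \<in> A \<Longrightarrow> g i \<in> OK) \<Longrightarrow> sum g A \<in> OK"
  by (induction A rule: finite_induct) (auto intro: OK0 OK_add)

lemma red_add: "x \<in> OK \<Longrightarrow> y \<in> OK \<Longrightarrow> red (x + y) = red x + red y"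
  and red_mult: "x \<in> OK \<Longrightarrow> y \<in> OK \<Longrightarrow> red (x * y) = red x * red y"
  using Uredhom by blast+
lemmas red1 = Ured1

lemma red0: "red 0 = 0"
proof -
  have "red 0 = red 0 + red 0" using red_add[OF OK0 OK0] by simp
  thus ?thesis by (metis add_cancel_right_right)
qed

lemma red_uminus: "x \<in> OK \<Longrightarrow> red (- x) = - red x"
proof -
  assume x: "x \<in> OK"
  have "red (x + - x) = red x + red (- x)" using red_add[OF x OK_uminus[OF x]] .
  hence "red x + red (- x) = 0" using red0 by simp
  thus ?thesis by (metis add.commute add_eq_0_iff2 eq_neg_iff_add_eq_0 minus_unique)
qed

lemma red_diff: "x \<in> OK \<Longrightarrow> y \<in> OK \<Longrightarrow> red (x - y) = red x - red y"
  using red_add[OF _ OK_uminus] red_uminus by (metis diff_conv_add_uminus)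

lemma red_pow: "x \<in> OK \<Longrightarrow> red (x ^ n) = red x ^ n"
  by (induction n) (auto simp: red1 red_mult OK_pow)

lemma red_of_nat: "red (of_nat n) = of_nat n"
  by (induction n) (auto simp: red0 red1 red_add OK_of_nat OK1)

lemma red_sum: "finite A \<Longrightarrow> (\<And>i. i \<in> A \<Longrightarrow> g i \<in> OK) \<Longrightarrow> red (sum g A) = (\<Sum>i\<in>A. red (g i))"
  by (induction A rule: finite_induct) (auto simp: red0 red_add OK_sum)

lemma red_zero_iff: "x \<in> OK \<Longrightarrow> red x = 0 \<longleftrightarrow> dvd_in OK (of_nat p) x"
  using Ukernel by blast

lemmas card_r = Ucard

lemma p_pos: "p > 0" using prime prime_gt_0_nat by blast
lemma p_ge3: "p \<ge> 3"
proof -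
  have "p \<ge> 2" using prime prime_ge_2_nat by blast
  moreover have "p \<noteq> 2" using oddp by auto
  ultimately show ?thesis by linarith
qed

lemma char_r: "(of_nat p :: 'r) = 0"
proof -
  have "dvd_in OK (of_nat p) (of_nat p)" unfolding dvd_in_def using OK1 by force
  hence "red (of_nat p) = 0" using red_zero_iff OK_of_nat by blast
  thus ?thesis by (simp add: red_of_nat)
qed

lemma char_r_dvd: "p dvd n \<Longrightarrow> (of_nat n :: 'r) = 0"
  using char_r by auto

lemma fermat: "(x :: 'r) ^ (p ^ f) = x"
proof (cases "x = 0")
  case True then show ?thesis using p_pos by simp
next
  case False
  define A where "A = UNIV - {0::'r}"
  have fin: "finite A" unfolding A_def by simp
  have inj: "inj_on (\<lambda>y. x * y) A" unfolding inj_on_def using False by simp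
  have img: "(\<lambda>y. x * y) ` A = A"
  proof
    show "(\<lambda>y. x * y) ` A \<subseteq> A" unfolding A_def using False by auto
    show "A \<subseteq> (\<lambda>y. x * y) ` A"
    proof
      fix z assume z: "z \<in> A"
      hence "inverse x * z \<in> A" "z = x * (inverse x * z)" unfolding A_def using False by auto
      thus "z \<in> (\<lambda>y. x * y) ` A" by blast
    qed
  qed
  have "prod (\<lambda>y. y) A = prod (\<lambda>y. y) ((\<lambda>y. x * y) ` A)" using img by simp
  also have "\<dots> = prod (\<lambda>y. x * y) A" using prod.reindex[OF inj, of "\<lambda>y. y"] by simp
  also have "\<dots> = prod (\<lambda>y. x) A * prod (\<lambda>y. y) A" by (rule prod.distrib)
  also have "prod (\<lambda>y. x) A = x ^ card A" by simp
  finally have eq: "prod (\<lambda>y. y) A = x ^ card A * prod (\<lambda>y. y) A" .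
  have nz: "prod (\<lambda>y. y) A \<noteq> 0" using fin unfolding A_def by simp
  have "1 * prod (\<lambda>y. y) A = x ^ card A * prod (\<lambda>y. y) A" using eq by simp
  hence "1 = x ^ card A" by (subst (asm) mult_right_cancel[OF nz])
  hence "x ^ card A = 1" by (rule sym)
  moreover have "card A = p ^ f - 1" unfolding A_def using card_r by (simp add: card_Diff_singleton)
  ultimately have "x ^ (p^f - 1) = 1" by simp
  moreover have "p ^ f = Suc (p^f - 1)" using p_pos by simp
  then obtain k where k: "p ^ f = Suc k" "k = p^f - 1" by blast
  have "x ^ (p ^ f) = x * x ^ k" unfolding k(1) by simp
  thus ?thesis using \<open>x ^ (p^f - 1) = 1\<close> k(2) by simp
qed

abbreviation "q \<equiv> p ^ f"
abbreviation "s \<equiv> p ^ (f - 1)"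

lemma f_pos: "0 < f" using f1 by simp
lemma p_ne1: "p \<noteq> Suc 0" using p_ge3 by simp

lemma q_eq: "q = p * s"
proof -
  obtain g where g: "f = Suc g" using f1 by (cases f) auto
  thus ?thesis by simp
qed

lemma s_pos: "s \<ge> 1" using p_pos by simp

lemma s_odd: "odd s" using oddp by simp

lemma q_ge3s: "3 * s \<le> q" using q_eq p_ge3 by simp

lemma q_ge3: "q \<ge> 3" using q_ge3s s_pos by linarith

lemma q_pow_mod: "(q ^ m) mod (q - 1) = 1"
proof -
  have e: "q = (q - 1) + 1" using q_ge3 by simp
  have "((q - 1) + 1) mod (q - 1) = 1 mod (q - 1)" by (rule mod_add_self1)
  hence "q mod (q - 1) = 1 mod (q - 1)" using e by simp
  hence "(q ^ m) mod (q - 1) = (1 ^ m) mod (q - 1)" by (metis power_mod)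
  thus ?thesis using q_ge3 by simp
qed

lemma q_pow_inj: "q ^ m = q ^ m' \<longleftrightarrow> m = m'"
  using q_ge3 by (simp add: power_inject_exp)

lemma L_nth: "(LT_log p f :: 'k fps) $ k = (if k \<in> range (\<lambda>m. q ^ m)
        then inverse (of_nat p ^ (LEAST m. q ^ m = k)) else 0)"
  unfolding LT_log_def by simp

lemma L_nz: "(LT_log p f :: 'k fps) $ k \<noteq> 0 \<Longrightarrow> \<exists>m. k = q ^ m"
  unfolding L_nth by (auto split: if_splits)

lemma L_nz_mod: "(LT_log p f :: 'k fps) $ k \<noteq> 0 \<Longrightarrow> k mod (q - 1) = 1"
  using L_nz q_pow_mod by blast

lemma L_pow: "(LT_log p f :: 'k fps) $ (q ^ m) = inverse (of_nat p ^ m)"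
proof -
  have "(LEAST m'. q ^ m' = q ^ m) = m"
    by (rule Least_equality) (auto simp: q_pow_inj)
  thus ?thesis unfolding L_nth by auto
qed

lemma L0: "(LT_log p f :: 'k fps) $ 0 = 0"
proof (rule ccontr)
  assume "(LT_log p f :: 'k fps) $ 0 \<noteq> 0"
  then obtain m where "0 = q ^ m" using L_nz by blast
  thus False using p_pos by simp
qed

lemma L1: "(LT_log p f :: 'k fps) $ 1 = 1"
  using L_pow[of 0] by simp

lemma Lq: "(LT_log p f :: 'k fps) $ q = inverse (of_nat p)"
  using L_pow[of 1] by simp

lemma L_small: "k < q ^ 2 \<Longrightarrow> (LT_log p f :: 'k fps) $ k =
   (if k = 1 then 1 else if k = q then inverse (of_nat p) else 0)"
proof -
  assume k: "k < q ^ 2"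
  show ?thesis
  proof (cases "(LT_log p f :: 'k fps) $ k = 0")
    case False
    then obtain m where m: "k = q ^ m" using L_nz by blast
    have "q ^ m < q ^ 2" using k m by simp
    hence "m < 2" using q_ge3 power_less_imp_less_exp[of q m 2] by simp
    hence "m = 0 \<or> m = 1" by auto
    thus ?thesis using m L1 Lq q_ge3 by auto
  next
    case True
    have "k \<noteq> 1" using True L1 by auto
    moreover have "k \<noteq> q" using True Lq p_pos by auto
    ultimately show ?thesis using True by simp
  qed
qed

lemma pow_OK:
  assumes "\<forall>k\<le>N. g $ k \<in> OK" "k \<le> N"
  shows "(g ^ j) $ k \<in> OK"
  using assms(2)
proof (induction j arbitrary: k)
  case 0 then show ?case by (simp add: OK0 OK1)
next
  case (Suc j)
  have "(g ^ Suc j) $ k = (\<Sum>i=0..k. g $ i * (g ^ j) $ (k - i))" by (simp add: fps_mult_nth)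
  also have "\<dots> \<in> OK" using Suc assms(1) by (intro OK_sum OK_mult) auto
  finally show ?case .
qed

lemma red_fps_nth: "red_fps red g $ n = red (g $ n)"
  unfolding red_fps_def by simp

lemma red_pow_fps:
  assumes "\<forall>k\<le>N. g $ k \<in> OK" "k \<le> N"
  shows "red ((g ^ j) $ k) = (red_fps red g ^ j) $ k"
  using assms(2)
proof (induction j arbitrary: k)
  case 0 then show ?case by (simp add: red0 red1)
next
  case (Suc j)
  have "red ((g ^ Suc j) $ k) = red (\<Sum>i=0..k. g $ i * (g ^ j) $ (k - i))" by (simp add: fps_mult_nth)
  also have "\<dots> = (\<Sum>i=0..k. red (g $ i * (g ^ j) $ (k - i)))"
    using assms(1) Suc.prems pow_OK[OF assms(1)] by (intro red_sum) (auto intro!: OK_mult)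
  also have "\<dots> = (\<Sum>i=0..k. red_fps red g $ i * (red_fps red g ^ j) $ (k - i))"
  proof (intro sum.cong refl)
    fix i assume i: "i \<in> {0..k}"
    have "red (g $ i * (g ^ j) $ (k - i)) = red (g $ i) * red ((g ^ j) $ (k - i))"
      using i Suc.prems assms(1) pow_OK[OF assms(1)] by (intro red_mult) auto
    also have "\<dots> = red_fps red g $ i * (red_fps red g ^ j) $ (k - i)"
      using Suc.IH[of "k - i"] Suc.prems i by (simp add: red_fps_nth)
    finally show "red (g $ i * (g ^ j) $ (k - i)) = red_fps red g $ i * (red_fps red g ^ j) $ (k - i)" .
  qed
  also have "\<dots> = (red_fps red g ^ Suc j) $ k" by (simp add: fps_mult_nth)
  finally show ?case .
qed

abbreviation "LL \<equiv> (LT_log p f :: 'k fps)"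
abbreviation "GG a \<equiv> (LT_endo p f a :: 'k fps)"

lemma inv0: "fps_inv LL $ 0 = 0"
  unfolding fps_inv_def by simp

lemma LG: "LL oo GG a = fps_const a * LL"
proof -
  have c0: "(fps_const a * LL) $ 0 = 0" using L0 by simp
  have "LL oo GG a = LL oo (fps_inv LL oo (fps_const a * LL))" unfolding LT_endo_def ..
  also have "\<dots> = (LL oo fps_inv LL) oo (fps_const a * LL)"
    by (rule fps_compose_assoc[OF c0 inv0])
  also have "LL oo fps_inv LL = fps_X" using L0 L1 by (intro fps_inv_right) auto
  also have "fps_X oo (fps_const a * LL) = fps_const a * LL" using c0 by simp
  finally show ?thesis .
qed

lemma G0: "GG a $ 0 = 0"
  unfolding LT_endo_def using inv0 by simp

lemma Gcoef: "(\<Sum>i=0..n. LL $ i * (GG a ^ i) $ n) = a * LL $ n"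
proof -
  have "(LL oo GG a) $ n = (fps_const a * LL) $ n" using LG by simp
  thus ?thesis by (simp add: fps_compose_nth)
qed

lemma sum_single:
  fixes g :: "nat \<Rightarrow> 'b::comm_monoid_add"
  assumes "finite A" "x \<in> A" "\<And>i. i \<in> A \<Longrightarrow> i \<noteq> x \<Longrightarrow> g i = 0"
  shows "sum g A = g x"
proof -
  have "sum g A = g x + sum g (A - {x})" using assms(1,2) by (rule sum.remove)
  also have "sum g (A - {x}) = 0" using assms(3) by (intro sum.neutral) auto
  finally show ?thesis by simp
qed

lemma G1: "GG a $ 1 = a"
proof -
  have "(\<Sum>i=0..1. LL $ i * (GG a ^ i) $ 1) = a * LL $ 1" by (rule Gcoef)
  thus ?thesis using L0 L1 by simp
qed

lemma G_supp: "GG a $ n \<noteq> 0 \<Longrightarrow> n mod (q - 1) = 1"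
proof (induction n rule: less_induct)
  case (less n)
  show ?case
  proof (rule ccontr)
    assume nm: "n mod (q - 1) \<noteq> 1"
    have n0: "n \<noteq> 0"
    proof
      assume "n = 0" thus False using less.prems G0[of a] by simp
    qed
    have Ln: "LL $ n = 0" using nm L_nz_mod by blast
    have "(\<Sum>i=0..n. LL $ i * (GG a ^ i) $ n) = LL $ 1 * (GG a ^ 1) $ n"
    proof (rule sum_single)
      show "1 \<in> {0..n}" using n0 by simp
    next
      fix i assume i: "i \<in> {0..n}" "i \<noteq> 1"
      show "LL $ i * (GG a ^ i) $ n = 0"
      proof (cases "LL $ i = 0")
        case False
        have imod: "i mod (q - 1) = 1" using L_nz_mod False by blast
        have i2: "i \<ge> 2" using i False L0 by (cases "i = 0") auto
        let ?A = "fps_cutoff n (GG a)"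
        have eq: "(GG a ^ i) $ n = (?A ^ i) $ n" using fps_pow_dep_strict[OF G0 i2] .
        have supA: "\<forall>k\<le>n. ?A $ k \<noteq> 0 \<longrightarrow> k mod (q - 1) = 1 mod (q - 1)"
        proof (intro allI impI)
          fix k assume "k \<le> n" "?A $ k \<noteq> 0"
          hence "k < n" "GG a $ k \<noteq> 0" by (auto split: if_splits)
          hence "k mod (q - 1) = 1" using less.IH by blast
          thus "k mod (q - 1) = 1 mod (q - 1)" using q_ge3 by simp
        qed
        have "(?A ^ i) $ n = 0"
        proof (rule ccontr)
          assume "(?A ^ i) $ n \<noteq> 0"
          hence "n mod (q - 1) = i mod (q - 1)" using fps_pow_supp[OF supA, of n i] by simp
          thus False using nm imod by simp
        qed
        thus ?thesis using eq by simp
      qed simp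
    qed simp
    hence "GG a $ n = a * LL $ n" using Gcoef[where a=a and n=n] L1 by simp
    thus False using Ln less.prems by simp
  qed
qed

abbreviation "SS a \<equiv> fps_shift q (GG a)"

lemma G_small: "n < q \<Longrightarrow> GG a $ n = (if n = 1 then a else 0)"
proof -
  assume n: "n < q"
  show ?thesis
  proof (cases "n = 1")
    case True then show ?thesis using G1 by simp
  next
    case False
    have "GG a $ n = 0"
    proof (rule ccontr)
      assume "GG a $ n \<noteq> 0"
      hence m: "n mod (q - 1) = 1" using G_supp by blast
      show False
      proof (cases "n < q - 1")
        case True then show False using m False by simp
      next
        case False
        hence "n = q - 1" using n by simp
        thus False using m q_ge3 by simp
      qed
    qed
    then show ?thesis using False by simp
  qed
qed

lemma G_decomp: "GG a = fps_const a * fps_X + fps_X ^ q * SS a"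
proof (rule fps_ext)
  fix n
  show "GG a $ n = (fps_const a * fps_X + fps_X ^ q * SS a) $ n"
  proof (cases "n < q")
    case True then show ?thesis using G_small[of n a] by (simp add: fps_X_power_mult_nth)
  next
    case False
    hence "n \<noteq> 1" using q_ge3 by simp
    then show ?thesis using False by (simp add: fps_X_power_mult_nth)
  qed
qed

lemma trunc_eq:
  assumes "q \<le> n" "n < q ^ 2"
  shows "of_nat p * GG a $ n + (GG a ^ q) $ n = (if n = q then a else 0)"
proof -
  have q1: "q \<noteq> 1" using q_ge3 by linarith
  have "(\<Sum>i=0..n. LL $ i * (GG a ^ i) $ n) =
        (\<Sum>i=0..n. (if i = 1 then (GG a ^ 1) $ n else 0) + (if i = q then inverse (of_nat p) * (GG a ^ q) $ n else 0))"
  proof (intro sum.cong refl)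
    fix i assume "i \<in> {0..n}"
    hence "i < q ^ 2" using assms by simp
    thus "LL $ i * (GG a ^ i) $ n =
        (if i = 1 then (GG a ^ 1) $ n else 0) + (if i = q then inverse (of_nat p) * (GG a ^ q) $ n else 0)"
      using L_small[of i] q1 by auto
  qed
  also have "\<dots> = (GG a ^ 1) $ n + inverse (of_nat p) * (GG a ^ q) $ n"
    using assms q_ge3 f_pos p_ne1 q1 by (simp add: sum.distrib)
  finally have "GG a $ n + inverse (of_nat p) * (GG a ^ q) $ n = a * LL $ n"
    using Gcoef[where a=a and n=n] by simp
  moreover have "LL $ n = (if n = q then inverse (of_nat p) else 0)"
  proof -
    have "n \<noteq> 1" using assms(1) q_ge3 by linarith
    thus ?thesis using L_small[of n] assms by auto
  qed
  ultimately have "GG a $ n + inverse (of_nat p) * (GG a ^ q) $ n = (if n = q then a * inverse (of_nat p) else 0)"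
    by simp
  hence "of_nat p * (GG a $ n + inverse (of_nat p) * (GG a ^ q) $ n) = of_nat p * (if n = q then a * inverse (of_nat p) else 0)"
    by simp
  moreover have pk: "(of_nat p :: 'k) \<noteq> 0" using p_pos by simp
  moreover have h1: "of_nat p * (inverse (of_nat p) * x) = x" for x :: 'k
    using pk by (simp add: mult.assoc[symmetric])
  moreover have h2: "of_nat p * (x * inverse (of_nat p)) = x" for x :: 'k
    using pk by (simp add: mult.commute[of x] mult.assoc[symmetric])
  ultimately show ?thesis by (simp add: distrib_left split: if_splits)
qed

lemma exp_eq: "j \<le> q \<Longrightarrow> q * j + (q - j) = q + (q - 1) * j"
proof -
  assume j: "j \<le> q"
  have a: "(q - 1) * j = q * j - j" by (simp add: diff_mult_distrib)
  have b: "j \<le> q * j" using q_ge3 by simp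
  show ?thesis using a b j by linarith
qed

lemma Gq_term:
  assumes j: "j \<le> q"
  shows "of_nat (q choose j) * (fps_X ^ q * SS a) ^ j * (fps_const a * fps_X) ^ (q - j) =
    fps_const (of_nat (q choose j) * a ^ (q - j)) * (fps_X ^ q * (fps_X ^ ((q - 1) * j) * SS a ^ j))"
proof -
  have e1: "(fps_X ^ q * SS a) ^ j = fps_X ^ (q * j) * SS a ^ j" by (simp add: power_mult_distrib power_mult)
  have e2: "(fps_const a * fps_X) ^ (q - j) = fps_const (a ^ (q - j)) * fps_X ^ (q - j)"
    by (simp add: power_mult_distrib)
  have e3: "(fps_X :: 'k fps) ^ (q * j) * fps_X ^ (q - j) = fps_X ^ q * fps_X ^ ((q - 1) * j)"
    by (simp add: power_add[symmetric] exp_eq[OF j])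
  have e4: "(of_nat (q choose j) :: 'k fps) = fps_const (of_nat (q choose j))" by (simp add: fps_of_nat)
  have "of_nat (q choose j) * (fps_X ^ q * SS a) ^ j * (fps_const a * fps_X) ^ (q - j) =
     fps_const (of_nat (q choose j)) * fps_const (a ^ (q - j)) * ((fps_X ^ (q * j) * fps_X ^ (q - j)) * SS a ^ j)"
    unfolding e1 e2 e4 by (simp only: mult_ac)
  also have "\<dots> = fps_const (of_nat (q choose j) * a ^ (q - j)) * (fps_X ^ q * (fps_X ^ ((q - 1) * j) * SS a ^ j))"
    unfolding e3 by (simp only: fps_const_mult mult_ac)
  finally show ?thesis .
qed

lemma Gq_coef:
  "(GG a ^ q) $ (q + m) = (\<Sum>j\<le>q. of_nat (q choose j) * a ^ (q - j) * (fps_X ^ ((q - 1) * j) * SS a ^ j) $ m)"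
proof -
  have "GG a ^ q = (fps_X ^ q * SS a + fps_const a * fps_X) ^ q" using G_decomp[of a] by (simp add: add.commute)
  also have "\<dots> = (\<Sum>j\<le>q. of_nat (q choose j) * (fps_X ^ q * SS a) ^ j * (fps_const a * fps_X) ^ (q - j))"
    by (rule binomial_ring)
  also have "\<dots> = (\<Sum>j\<le>q. fps_const (of_nat (q choose j) * a ^ (q - j)) * (fps_X ^ q * (fps_X ^ ((q - 1) * j) * SS a ^ j)))"
    by (intro sum.cong refl Gq_term) simp
  finally show ?thesis by (simp add: fps_sum_nth fps_X_power_mult_nth)
qed

lemma eqK:
  assumes m: "m < (q - 1) * q"
  shows "of_nat p * SS a $ m + (if m = 0 then a ^ q else 0) +
    (\<Sum>j\<in>{1..q-1}. of_nat (q choose j) * a ^ (q - j) * (fps_X ^ ((q - 1) * j) * SS a ^ j) $ m)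
    = (if m = 0 then a else 0)"
proof -
  define F where "F j = of_nat (q choose j) * a ^ (q - j) * (fps_X ^ ((q - 1) * j) * SS a ^ j) $ m" for j
  have set: "{..q} = insert 0 (insert q {1..q-1})" using q_ge3 by auto
  have "(\<Sum>j\<le>q. F j) = F 0 + (F q + (\<Sum>j\<in>{1..q-1}. F j))"
  proof -
    have a1: "0 \<notin> insert q {1..q-1}" using q_ge3 p_pos by auto
    have a2: "q \<notin> {1..q-1}" using q_ge3 by auto
    show ?thesis unfolding set using sum.insert[OF _ a1, of F] sum.insert[OF _ a2, of F] by simp
  qed
  moreover have "F 0 = (if m = 0 then a ^ q else 0)" unfolding F_def by simp
  moreover have "F q = 0" unfolding F_def using m by (simp add: fps_X_power_mult_nth)
  ultimately have "(GG a ^ q) $ (q + m) = (if m = 0 then a ^ q else 0) + (\<Sum>j\<in>{1..q-1}. F j)"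
    using Gq_coef[of a m] unfolding F_def by simp
  moreover have "q + m < q ^ 2" using m q_ge3 by (simp add: power2_eq_square algebra_simps)
  ultimately have "of_nat p * GG a $ (q + m) + ((if m = 0 then a ^ q else 0) + (\<Sum>j\<in>{1..q-1}. F j))
     = (if q + m = q then a else 0)"
    using trunc_eq[of "q + m" a] by simp
  moreover have "GG a $ (q + m) = SS a $ m" by (simp add: add.commute)
  ultimately show ?thesis unfolding F_def by (simp add: add.assoc)
qed

definition bq :: "nat \<Rightarrow> nat" where "bq j = (q choose j) div p"

lemma bq_mult: "j \<in> {1..q-1} \<Longrightarrow> q choose j = p * bq j"
proof -
  assume j: "j \<in> {1..q-1}"
  have "p dvd (q choose j)" using choose_pp_dvd[OF prime, of j f] j q_ge3 by auto
  thus ?thesis unfolding bq_def by simp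
qed

lemma S_formula:
  assumes m: "m < (q - 1) * q" and w: "a - a ^ q = of_nat p * w"
  shows "SS a $ m = (if m = 0 then w else 0) -
    (\<Sum>j\<in>{1..q-1}. of_nat (bq j) * a ^ (q - j) * (fps_X ^ ((q - 1) * j) * SS a ^ j) $ m)"
proof -
  define t where "t j = a ^ (q - j) * (fps_X ^ ((q - 1) * j) * SS a ^ j) $ m" for j
  have "(\<Sum>j\<in>{1..q-1}. of_nat (q choose j) * t j) = (\<Sum>j\<in>{1..q-1}. of_nat p * (of_nat (bq j) * t j))"
    by (intro sum.cong refl) (simp add: bq_mult mult.assoc)
  also have "\<dots> = of_nat p * (\<Sum>j\<in>{1..q-1}. of_nat (bq j) * t j)" by (simp add: sum_distrib_left)
  finally have e: "(\<Sum>j\<in>{1..q-1}. of_nat (q choose j) * t j) = of_nat p * (\<Sum>j\<in>{1..q-1}. of_nat (bq j) * t j)" .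
  have "of_nat p * SS a $ m + (if m = 0 then a ^ q else 0) + (\<Sum>j\<in>{1..q-1}. of_nat (q choose j) * t j)
    = (if m = 0 then a else 0)"
    using eqK[OF m, of a] unfolding t_def by (simp add: mult.assoc)
  hence "of_nat p * SS a $ m = (if m = 0 then a - a ^ q else 0) - of_nat p * (\<Sum>j\<in>{1..q-1}. of_nat (bq j) * t j)"
    unfolding e by (simp split: if_splits add: algebra_simps)
  also have "\<dots> = of_nat p * ((if m = 0 then w else 0) - (\<Sum>j\<in>{1..q-1}. of_nat (bq j) * t j))"
    using w by (simp add: algebra_simps)
  finally have "SS a $ m = (if m = 0 then w else 0) - (\<Sum>j\<in>{1..q-1}. of_nat (bq j) * t j)"
    using p_pos by simp
  thus ?thesis unfolding t_def by (simp add: mult.assoc)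
qed

lemma term_OK:
  assumes "\<forall>k<m. g $ k \<in> OK" "1 \<le> j"
  shows "(fps_X ^ ((q - 1) * j) * g ^ j) $ m \<in> OK"
proof (cases "m < (q - 1) * j")
  case True then show ?thesis by (simp add: fps_X_power_mult_nth OK0)
next
  case False
  have pos: "(q - 1) * j > 0" using q_ge3 assms(2) by simp
  have "\<forall>k\<le>m - (q - 1) * j. g $ k \<in> OK"
  proof (intro allI impI)
    fix k assume "k \<le> m - (q - 1) * j"
    hence "k < m" using pos False by linarith
    thus "g $ k \<in> OK" using assms(1) by blast
  qed
  hence "(g ^ j) $ (m - (q - 1) * j) \<in> OK" using pow_OK by blast
  then show ?thesis using False by (simp add: fps_X_power_mult_nth)
qed

lemma term_red:
  assumes "\<forall>k\<le>m. g $ k \<in> OK"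
  shows "red ((fps_X ^ ((q - 1) * j) * g ^ j) $ m) = (fps_X ^ ((q - 1) * j) * red_fps red g ^ j) $ m"
proof (cases "m < (q - 1) * j")
  case True then show ?thesis by (simp add: fps_X_power_mult_nth red0)
next
  case False
  have "\<forall>k\<le>m - (q - 1) * j. g $ k \<in> OK" using assms by auto
  hence "red ((g ^ j) $ (m - (q - 1) * j)) = (red_fps red g ^ j) $ (m - (q - 1) * j)"
    using red_pow_fps by blast
  then show ?thesis using False by (simp add: fps_X_power_mult_nth)
qed

lemma S_OK:
  assumes aOK: "a \<in> OK" and wOK: "w \<in> OK" and w: "a - a ^ q = of_nat p * w"
  shows "m < (q - 1) * q \<Longrightarrow> SS a $ m \<in> OK"
proof (induction m rule: less_induct)
  case (less m)
  have IH: "\<forall>k<m. SS a $ k \<in> OK" using less by auto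
  have "(if m = 0 then w else 0) -
    (\<Sum>j\<in>{1..q-1}. of_nat (bq j) * a ^ (q - j) * (fps_X ^ ((q - 1) * j) * SS a ^ j) $ m) \<in> OK"
    using IH term_OK[OF IH] by (intro OK_diff OK_sum OK_mult OK_of_nat OK_pow aOK) (auto simp: wOK OK0)
  then show ?case using S_formula[OF less.prems w] by simp
qed

lemma S_red:
  assumes aOK: "a \<in> OK" and wOK: "w \<in> OK" and w: "a - a ^ q = of_nat p * w"
    and m: "m < (q - 1) * q"
  shows "red (SS a $ m) = (if m = 0 then red w else 0) -
    (\<Sum>j\<in>{1..q-1}. of_nat (bq j) * red a ^ (q - j) * (fps_X ^ ((q - 1) * j) * red_fps red (SS a) ^ j) $ m)"
proof -
  have allOK: "\<forall>k\<le>m. SS a $ k \<in> OK" using S_OK[OF aOK wOK w] m by auto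
  have tOK: "(fps_X ^ ((q - 1) * j) * SS a ^ j) $ m \<in> OK" if "j \<in> {1..q-1}" for j
    using term_OK[of m "SS a" j] allOK that by auto
  have "red (SS a $ m) = red ((if m = 0 then w else 0) -
    (\<Sum>j\<in>{1..q-1}. of_nat (bq j) * a ^ (q - j) * (fps_X ^ ((q - 1) * j) * SS a ^ j) $ m))"
    using S_formula[OF m w] by simp
  also have "\<dots> = red (if m = 0 then w else 0) -
    red (\<Sum>j\<in>{1..q-1}. of_nat (bq j) * a ^ (q - j) * (fps_X ^ ((q - 1) * j) * SS a ^ j) $ m)"
    using tOK by (intro red_diff OK_sum OK_mult OK_of_nat OK_pow aOK) (auto simp: wOK OK0)
  also have "red (\<Sum>j\<in>{1..q-1}. of_nat (bq j) * a ^ (q - j) * (fps_X ^ ((q - 1) * j) * SS a ^ j) $ m)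
    = (\<Sum>j\<in>{1..q-1}. red (of_nat (bq j) * a ^ (q - j) * (fps_X ^ ((q - 1) * j) * SS a ^ j) $ m))"
    using tOK by (intro red_sum OK_mult OK_of_nat OK_pow aOK) auto
  also have "\<dots> = (\<Sum>j\<in>{1..q-1}. of_nat (bq j) * red a ^ (q - j) * (fps_X ^ ((q - 1) * j) * red_fps red (SS a) ^ j) $ m)"
  proof (intro sum.cong refl)
    fix j assume j: "j \<in> {1..q-1}"
    have "red (of_nat (bq j) * a ^ (q - j) * (fps_X ^ ((q - 1) * j) * SS a ^ j) $ m)
      = red (of_nat (bq j) * a ^ (q - j)) * red ((fps_X ^ ((q - 1) * j) * SS a ^ j) $ m)"
      using tOK[OF j] by (intro red_mult OK_mult OK_of_nat OK_pow aOK)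
    also have "\<dots> = of_nat (bq j) * red a ^ (q - j) * (fps_X ^ ((q - 1) * j) * red_fps red (SS a) ^ j) $ m"
      using term_red[OF allOK, of j] by (simp add: red_mult OK_of_nat OK_pow aOK red_of_nat red_pow)
    finally show "red (of_nat (bq j) * a ^ (q - j) * (fps_X ^ ((q - 1) * j) * SS a ^ j) $ m)
      = of_nat (bq j) * red a ^ (q - j) * (fps_X ^ ((q - 1) * j) * red_fps red (SS a) ^ j) $ m" .
  qed
  also have "red (if m = 0 then w else 0) = (if m = 0 then red w else 0)" by (simp add: red0)
  finally show ?thesis .
qed

lemma beta0:
  assumes "1 \<le> j" "j < 2 * s" "j \<noteq> s"
  shows "(of_nat (bq j) :: 'r) = 0"
proof -
  have "p ^ 2 dvd (q choose j)" using choose_pp_dvd2[OF prime f1, of j] assms by simp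
  then obtain k where k0: "q choose j = p ^ 2 * k" by (elim dvdE)
  hence k: "q choose j = p * (p * k)" by (simp add: power2_eq_square mult.assoc)
  hence "bq j = p * k" unfolding bq_def using p_pos by simp
  thus ?thesis using char_r_dvd by simp
qed

lemma choose_m1: "m < q \<Longrightarrow> (of_nat ((q - 1) choose m) :: 'r) = (-1) ^ m"
proof (induction m)
  case 0 then show ?case by simp
next
  case (Suc m)
  have qs: "q = Suc (q - 1)" using q_ge3 by simp
  have "q choose Suc m = ((q - 1) choose m) + ((q - 1) choose Suc m)"
    by (subst qs) (simp only: binomial_Suc_Suc)
  moreover have "(of_nat (q choose Suc m) :: 'r) = 0"
    using choose_pp_dvd[OF prime, of "Suc m" f] Suc.prems by (intro char_r_dvd) simp
  ultimately have "(of_nat ((q - 1) choose m) :: 'r) + of_nat ((q - 1) choose Suc m) = 0"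
    by (simp only: of_nat_add[symmetric])
  hence "(of_nat ((q - 1) choose Suc m) :: 'r) = - of_nat ((q - 1) choose m)"
    by (simp add: eq_neg_iff_add_eq_0 add.commute)
  also have "\<dots> = - ((-1) ^ m)" using Suc by simp
  finally show ?case by simp
qed

lemma beta_s: "(of_nat (bq s) :: 'r) = 1"
proof -
  have "s * (q choose s) = q * ((q - 1) choose (s - 1))"
    by (rule times_binomial_minus1_eq) (use s_pos in linarith)
  also have "\<dots> = s * (p * ((q - 1) choose (s - 1)))" using q_eq by (simp add: mult_ac)
  finally have "q choose s = p * ((q - 1) choose (s - 1))" using s_pos p_pos by simp
  hence "bq s = (q - 1) choose (s - 1)" unfolding bq_def using p_pos by simp
  moreover have "s - 1 < q" using q_ge3s q_ge3 by linarith
  ultimately have "(of_nat (bq s) :: 'r) = (-1) ^ (s - 1)" using choose_m1 by simp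
  moreover have "even (s - 1)" using s_odd s_pos by simp
  ultimately show ?thesis by simp
qed

lemma T_step1:
  assumes aOK: "a \<in> OK" and wOK: "w \<in> OK" and w: "a - a ^ q = of_nat p * w"
    and m: "m < (q - 1) * s"
  shows "red_fps red (SS a) $ m = (if m = 0 then red w else 0)"
proof -
  have "s \<le> q" using q_ge3s by linarith
  hence "(q - 1) * s \<le> (q - 1) * q" by simp
  hence mq: "m < (q - 1) * q" using m by linarith
  have "(\<Sum>j\<in>{1..q-1}. of_nat (bq j) * red a ^ (q - j) * (fps_X ^ ((q - 1) * j) * red_fps red (SS a) ^ j) $ m) = 0"
  proof (intro sum.neutral ballI)
    fix j assume j: "j \<in> {1..q-1}"
    show "of_nat (bq j) * red a ^ (q - j) * (fps_X ^ ((q - 1) * j) * red_fps red (SS a) ^ j) $ m = 0"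
    proof (cases "j < 2 * s \<and> j \<noteq> s")
      case True then show ?thesis using beta0[of j] j by simp
    next
      case False
      hence "s \<le> j" by auto
      hence "(q - 1) * s \<le> (q - 1) * j" by simp
      hence "m < (q - 1) * j" using m by linarith
      then show ?thesis by (simp add: fps_X_power_mult_nth)
    qed
  qed
  thus ?thesis using S_red[OF aOK wOK w mq] by (simp add: red_fps_nth)
qed

lemma T_step2:
  assumes aOK: "a \<in> OK" and wOK: "w \<in> OK" and w: "a - a ^ q = of_nat p * w"
    and m1: "(q - 1) * s \<le> m" and m2: "m < 2 * ((q - 1) * s)"
  shows "red_fps red (SS a) $ m = (if m = (q - 1) * s then - (red a ^ (q - s) * red w ^ s) else 0)"
proof -
  let ?T = "red_fps red (SS a)"
  have "2 * s \<le> q" using q_ge3s by linarith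
  hence "(q - 1) * (2 * s) \<le> (q - 1) * q" by (rule mult_le_mono2)
  moreover have "2 * ((q - 1) * s) = (q - 1) * (2 * s)" by (simp add: mult_ac)
  ultimately have mq: "m < (q - 1) * q" using m2 by linarith
  have "1 \<le> s" "s \<le> q - 1" using s_pos q_ge3s by linarith+
  hence sin: "s \<in> {1..q-1}" by (simp only: atLeastAtMost_iff)
  have pos: "(q - 1) * s > 0" by (intro mult_pos_pos) (use q_ge3 s_pos in linarith)+
  have "(\<Sum>j\<in>{1..q-1}. of_nat (bq j) * red a ^ (q - j) * (fps_X ^ ((q - 1) * j) * ?T ^ j) $ m)
     = of_nat (bq s) * red a ^ (q - s) * (fps_X ^ ((q - 1) * s) * ?T ^ s) $ m"
  proof (rule sum_single[OF _ sin])
    fix j assume j: "j \<in> {1..q-1}" "j \<noteq> s"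
    show "of_nat (bq j) * red a ^ (q - j) * (fps_X ^ ((q - 1) * j) * ?T ^ j) $ m = 0"
    proof (cases "j < 2 * s")
      case True then show ?thesis using beta0[of j] j by simp
    next
      case False
      hence "(q - 1) * (2 * s) \<le> (q - 1) * j" by (intro mult_le_mono2) simp
      moreover have "2 * ((q - 1) * s) = (q - 1) * (2 * s)" by (simp add: mult_ac)
      ultimately have "m < (q - 1) * j" using m2 by linarith
      then show ?thesis by (simp add: fps_X_power_mult_nth)
    qed
  qed simp
  also have "\<dots> = red a ^ (q - s) * (?T ^ s) $ (m - (q - 1) * s)"
    using beta_s m1 by (simp add: fps_X_power_mult_nth)
  also have "(?T ^ s) $ (m - (q - 1) * s) = (fps_const (red w) ^ s) $ (m - (q - 1) * s)"
  proof (rule fps_pow_dep[where N = "m - (q - 1) * s"])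
    show "\<forall>k\<le>m - (q - 1) * s. ?T $ k = fps_const (red w) $ k"
    proof (intro allI impI)
      fix k assume "k \<le> m - (q - 1) * s"
      hence "k < (q - 1) * s" using m2 m1 by linarith
      thus "?T $ k = fps_const (red w) $ k" using T_step1[OF aOK wOK w] by simp
    qed
  qed simp
  also have "\<dots> = (if m = (q - 1) * s then red w ^ s else 0)"
    using m1 by (simp add: fps_const_power)
  finally have sumeq: "(\<Sum>j\<in>{1..q-1}. of_nat (bq j) * red a ^ (q - j) * (fps_X ^ ((q - 1) * j) * ?T ^ j) $ m)
     = red a ^ (q - s) * (if m = (q - 1) * s then red w ^ s else 0)" .
  have "m \<noteq> 0" using m1 pos by linarith
  thus ?thesis using S_red[OF aOK wOK w mq] sumeq by (simp add: red_fps_nth)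
qed

lemma part2:
  assumes aOK: "a \<in> OK" and a0: "a \<noteq> 0" and ainv: "inverse a \<in> OK"
  shows "\<exists>h :: 'r fps. (\<forall>n. \<not> (q - 1) dvd n \<longrightarrow> h $ n = 0) \<and>
    inverse (f_LT p f red a) =
      1 + fps_const (red ((1 - a ^ (q - 1)) / of_nat p)) * fps_X ^ (q - 1)
      - fps_const (red ((1 - a ^ (q - 1)) / of_nat p) ^ s) * fps_X ^ ((q - 1) * (s + 1))
      + fps_X ^ ((q - 1) * (2 * s + 1)) * h"
proof -
  define c where "c = red ((1 - a ^ (q - 1)) / of_nat p)"
  define ab where "ab = red a"
  have pk: "(of_nat p :: 'k) \<noteq> 0" using p_pos by simp
  have "ab * red (inverse a) = 1" unfolding ab_def using red_mult[OF aOK ainv] a0 red1 by simp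
  hence ab0: "ab \<noteq> 0" by auto
  have qsuc: "q = Suc (q - 1)" using q_ge3 by simp
  have "ab * ab ^ (q - 1) = ab ^ q" by (subst (2) qsuc) simp
  also have "\<dots> = ab" by (simp add: fermat)
  finally have abq1: "ab ^ (q - 1) = 1" using ab0 by simp
  have "red (1 - a ^ (q - 1)) = 0" using abq1 unfolding ab_def
    by (simp add: red_diff OK1 OK_pow aOK red1 red_pow)
  hence "dvd_in OK (of_nat p) (1 - a ^ (q - 1))" using red_zero_iff OK_diff OK1 OK_pow aOK by blast
  then obtain v where vOK: "v \<in> OK" and v: "1 - a ^ (q - 1) = of_nat p * v" unfolding dvd_in_def by blast
  have cv: "c = red v" unfolding c_def v using pk by simp
  define w where "w = a * v"
  have wOK: "w \<in> OK" unfolding w_def using aOK vOK by (rule OK_mult)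
  have aq: "a ^ q = a * a ^ (q - 1)" by (subst qsuc) simp
  have "a - a ^ q = a * (1 - a ^ (q - 1))" unfolding aq by (simp add: algebra_simps)
  also have "\<dots> = a * (of_nat p * v)" by (simp only: v)
  finally have w: "a - a ^ q = of_nat p * w" unfolding w_def by (simp add: mult_ac)
  have rw: "red w = ab * c" unfolding w_def ab_def cv using red_mult[OF aOK vOK] .
  define Gb where "Gb = red_fps red (GG a)"
  define N0 where "N0 = (q - 1) * (2 * s + 1)"
  define h where "h = Abs_fps (\<lambda>n. if (q - 1) dvd n then Gb $ (n + N0 + 1) / ab else 0)"
  define U where "U = 1 + fps_const c * fps_X ^ (q - 1) - fps_const (c ^ s) * fps_X ^ ((q - 1) * (s + 1))
      + fps_X ^ N0 * h"
  have hsupp: "\<forall>n. \<not> (q - 1) dvd n \<longrightarrow> h $ n = 0" unfolding h_def by simp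
  have qm1: "q - 1 \<ge> 2" using q_ge3 by linarith
  have N0e: "N0 = 2 * ((q - 1) * s) + (q - 1)" unfolding N0_def by (simp add: algebra_simps)
  have se: "(q - 1) * (s + 1) = (q - 1) * s + (q - 1)" by (simp add: algebra_simps)
  have possq: "(q - 1) * s > 0" by (intro mult_pos_pos) (use q_ge3 s_pos in linarith)+
  have Unth: "U $ k = (if k = 0 then 1 else 0) + (if k = q - 1 then c else 0)
       - (if k = (q - 1) * (s + 1) then c ^ s else 0) + (if k < N0 then 0 else h $ (k - N0))" for k
    unfolding U_def by (simp add: fps_X_power_mult_nth)
  have Gbn: "Gb $ n = red (GG a $ n)" for n unfolding Gb_def by (simp add: red_fps_nth)
  have key: "Gb $ Suc k = ab * U $ k" for k
  proof (cases "k < N0")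
    case False
    have z1: "k \<noteq> 0" "k \<noteq> q - 1" "k \<noteq> (q - 1) * (s + 1)" using False N0e se possq qm1 by linarith+
    have "ab * U $ k = ab * h $ (k - N0)" using z1 False unfolding Unth by simp
    also have "\<dots> = (if (q - 1) dvd (k - N0) then Gb $ Suc k else 0)"
      unfolding h_def using ab0 False by simp
    also have "\<dots> = Gb $ Suc k"
    proof (cases "(q - 1) dvd (k - N0)")
      case nd: False
      have "GG a $ Suc k = 0"
      proof (rule ccontr)
        assume "GG a $ Suc k \<noteq> 0"
        hence "Suc k mod (q - 1) = 1" using G_supp by blast
        hence "k mod (q - 1) = 0" using qm1 by (simp add: mod_Suc split: if_splits)
        hence "(q - 1) dvd k" by auto
        moreover have "(q - 1) dvd N0" unfolding N0_def by simp
        ultimately have "(q - 1) dvd (k - N0)" by (rule dvd_diff_nat)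
        thus False using nd by simp
      qed
      thus ?thesis using nd Gbn red0 by simp
    qed simp
    finally show ?thesis by simp
  next
    case True
    hence hz: "(if k < N0 then 0 else h $ (k - N0)) = 0" by simp
    show ?thesis
    proof (cases "Suc k < q")
      case True
      have z1: "k \<noteq> q - 1" "k \<noteq> (q - 1) * (s + 1)" using True se by linarith+
      have "Gb $ Suc k = red (if Suc k = 1 then a else 0)" using Gbn G_small[OF True] by simp
      also have "\<dots> = (if k = 0 then ab else 0)" unfolding ab_def by (simp add: red0)
      also have "\<dots> = ab * U $ k" unfolding Unth using z1 hz by simp
      finally show ?thesis .
    next
      case False
      define m where "m = Suc k - q"
      have km: "Suc k = q + m" unfolding m_def using False by simp
      have GS: "GG a $ Suc k = SS a $ m" unfolding km by (simp add: add.commute)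
      have m2: "m < 2 * ((q - 1) * s)" using True km N0e by linarith
      have k0: "k \<noteq> 0" using km qm1 by linarith
      show ?thesis
      proof (cases "m < (q - 1) * s")
        case True
        have "Gb $ Suc k = red_fps red (SS a) $ m" using Gbn GS by (simp add: red_fps_nth)
        also have "\<dots> = (if m = 0 then ab * c else 0)" using T_step1[OF aOK wOK w True] rw by simp
        also have "\<dots> = ab * U $ k"
        proof -
          have "k = q - 1 \<longleftrightarrow> m = 0" using km qm1 by linarith
          moreover have "k \<noteq> (q - 1) * (s + 1)" using km se True by linarith
          ultimately show ?thesis unfolding Unth using k0 hz by simp
        qed
        finally show ?thesis .
      next
        case False
        have "Gb $ Suc k = red_fps red (SS a) $ m" using Gbn GS by (simp add: red_fps_nth)
        also have "\<dots> = (if m = (q - 1) * s then - (ab ^ (q - s) * (ab * c) ^ s) else 0)"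
          using T_step2[OF aOK wOK w _ m2] False rw unfolding ab_def by simp
        also have "ab ^ (q - s) * (ab * c) ^ s = ab * c ^ s"
        proof -
          have "ab ^ (q - s) * (ab * c) ^ s = ab ^ (q - s + s) * c ^ s"
            by (simp add: power_mult_distrib power_add mult_ac)
          also have "q - s + s = q" using q_ge3s by linarith
          finally show ?thesis by (simp add: fermat)
        qed
        also have "(if m = (q - 1) * s then - (ab * c ^ s) else 0) = ab * U $ k"
        proof -
          have "k \<noteq> q - 1" using km False possq by linarith
          moreover have "k = (q - 1) * (s + 1) \<longleftrightarrow> m = (q - 1) * s" using km se qm1 by linarith
          ultimately show ?thesis unfolding Unth using k0 hz by (simp add: algebra_simps)
        qed
        finally show ?thesis .
      qed
    qed
  qed
  define Y where "Y = fps_const ab * (fps_X :: 'r fps)"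
  have Y0: "Y \<noteq> 0"
  proof
    assume "Y = 0"
    hence "Y $ 1 = 0" by simp
    thus False unfolding Y_def using ab0 by simp
  qed
  have Gb_eq: "Gb = Y * U"
  proof (rule fps_ext)
    fix n show "Gb $ n = (Y * U) $ n"
    proof (cases n)
      case 0 then show ?thesis unfolding Y_def using Gbn G0 red0 by simp
    next
      case (Suc k)
      have "(Y * U) $ n = ab * U $ k" unfolding Y_def Suc by (simp add: mult.assoc)
      thus ?thesis using key Suc by simp
    qed
  qed
  have U0: "U $ 0 = 1" unfolding Unth using qm1 possq N0e by simp
  have UU: "U * inverse U = 1" using U0 by (intro inverse_mult_eq_1') simp
  have U_ne: "U \<noteq> 0" using U0 by auto
  have "f_LT p f red a = Y / Gb" unfolding f_LT_def Y_def Gb_def ab_def ..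
  also have "\<dots> = (Y * U * inverse U) / (Y * U)" unfolding Gb_eq using UU by (simp add: mult.assoc)
  also have "\<dots> = inverse U" using Y0 U_ne by (subst nonzero_mult_div_cancel_left) auto
  finally have "inverse (f_LT p f red a) = U" using U0 by simp
  thus ?thesis using hsupp unfolding U_def N0_def c_def by blast
qed

lemma part1:
  assumes aOK: "a \<in> OK" and a1: "a ^ (q - 1) = 1"
  shows "f_LT p f red a = 1"
proof -
  have qsuc: "q = Suc (q - 1)" using q_ge3 by simp
  obtain r where r: "q = Suc r" "r = q - 1" using qsuc by blast
  have "a ^ q = a * a ^ r" unfolding r(1) by simp
  hence aq: "a ^ q = a" using a1 r(2) by simp
  have apow: "a ^ (q ^ m) = a" for m
  proof (induction m)
    case 0 then show ?case by simp
  next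
    case (Suc m)
    have "a ^ (q ^ Suc m) = (a ^ (q ^ m)) ^ q" by (simp add: power_mult[symmetric] mult.commute)
    thus ?case using Suc aq by simp
  qed
  have Lcomp: "LL oo (fps_const a * fps_X) = fps_const a * LL"
  proof (rule fps_ext)
    fix n
    have "(LL oo (fps_const a * fps_X)) $ n = (\<Sum>i=0..n. LL $ i * ((fps_const a * fps_X) ^ i) $ n)"
      by (simp add: fps_compose_nth)
    also have "\<dots> = LL $ n * ((fps_const a * fps_X) ^ n) $ n"
      by (rule sum_single) (auto simp: power_mult_distrib)
    also have "\<dots> = LL $ n * a ^ n" by (simp add: power_mult_distrib)
    also have "\<dots> = a * LL $ n"
    proof (cases "LL $ n = 0")
      case False
      then obtain m where "n = q ^ m" using L_nz by blast
      thus ?thesis using apow by simp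
    qed simp
    finally show "(LL oo (fps_const a * fps_X)) $ n = (fps_const a * LL) $ n" by simp
  qed
  have c0: "(fps_const a * fps_X :: 'k fps) $ 0 = 0" by simp
  have "GG a = fps_inv LL oo (fps_const a * LL)" unfolding LT_endo_def ..
  also have "\<dots> = fps_inv LL oo (LL oo (fps_const a * fps_X))" unfolding Lcomp ..
  also have "\<dots> = (fps_inv LL oo LL) oo (fps_const a * fps_X)" by (rule fps_compose_assoc[OF c0 L0])
  also have "fps_inv LL oo LL = fps_X" using L0 L1 by (intro fps_inv) auto
  also have "fps_X oo (fps_const a * fps_X) = fps_const a * fps_X" using c0 by simp
  finally have G: "GG a = fps_const a * fps_X" .
  have "red a ^ (q - 1) = 1" using red_pow[OF aOK] a1 red1 by metis
  hence ab0: "red a \<noteq> 0" using q_ge3 by (auto simp: power_0_left)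
  have R: "red_fps red (GG a) = fps_const (red a) * fps_X"
    unfolding G by (rule fps_ext) (simp add: red_fps_nth red0)
  have Y0: "fps_const (red a) * (fps_X :: 'r fps) \<noteq> 0"
  proof
    assume "fps_const (red a) * (fps_X :: 'r fps) = 0"
    hence "(fps_const (red a) * (fps_X :: 'r fps)) $ 1 = 0" by simp
    thus False using ab0 by simp
  qed
  show ?thesis unfolding f_LT_def R using Y0 by simp
qed

end

theorem lemma2p1:
  fixes p f :: nat and OK :: "'k::field_char_0 set" and red :: "'k \<Rightarrow> 'r::{field,finite}"
  assumes "prime p" and "odd p" and "f \<ge> 1"
    and "unramified_setup p f OK red"
  shows "(\<forall>a. a \<in> OK \<and> a ^ (p ^ f - 1) = 1 \<longrightarrow> f_LT p f red a = 1) \<and>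
         (\<forall>a. a \<in> OK \<and> a \<noteq> 0 \<and> inverse a \<in> OK \<longrightarrow>
            (let q = p ^ f; c = red ((1 - a ^ (q - 1)) / of_nat p) in
             \<exists>h :: 'r fps. (\<forall>n. \<not> (q - 1) dvd n \<longrightarrow> fps_nth h n = 0) \<and>
               inverse (f_LT p f red a) =
                 1 + fps_const c * fps_X ^ (q - 1)
                   - fps_const (c ^ (p ^ (f - 1))) * fps_X ^ ((q - 1) * (p ^ (f - 1) + 1))
                   + fps_X ^ ((q - 1) * (2 * p ^ (f - 1) + 1)) * h))"
proof -
  interpret LTctx p f OK red using assms by unfold_locales
  show ?thesis
  proof (intro conjI allI impI)
    fix a :: 'k assume "a \<in> OK \<and> a ^ (p ^ f - 1) = 1"
    thus "f_LT p f red a = 1" using part1 by blast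
  next
    fix a :: 'k assume a: "a \<in> OK \<and> a \<noteq> 0 \<and> inverse a \<in> OK"
    show "let q = p ^ f; c = red ((1 - a ^ (q - 1)) / of_nat p) in
             \<exists>h :: 'r fps. (\<forall>n. \<not> (q - 1) dvd n \<longrightarrow> fps_nth h n = 0) \<and>
               inverse (f_LT p f red a) =
                 1 + fps_const c * fps_X ^ (q - 1)
                   - fps_const (c ^ (p ^ (f - 1))) * fps_X ^ ((q - 1) * (p ^ (f - 1) + 1))
                   + fps_X ^ ((q - 1) * (2 * p ^ (f - 1) + 1)) * h"
      unfolding Let_def using part2[of a] a by blast
  qed
qed

end
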